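(* Let $N\ge1$, let $G=(\mathcal{V},\mathcal{E},P_V)$ and $\tilde G_i=(\mathcal{V}_i,\mathcal{E}_i,P_{V_i})$, $i\le N$, be probabilistic graphs with $G=\bigsqcup_{i\le N}\tilde G_i$ and $\tilde G_1\simeq\tilde G_2\simeq\dots\simeq\tilde G_N$. Then $H_\chi(G)=H_\chi(\tilde G_1)$.
   Context: A probabilistic graph is $(\mathcal{V},\mathcal{E},P_V)$: a finite graph with a probability distribution $P_V$ on its vertices. A coloring is a map $c$ from the vertices to a finite set such that adjacent vertices get different colors; $H_\chi(G)=\inf\{H(c(V)):c\text{ a coloring of }G\}$ with $V\sim P_V$. $G=\bigsqcup_{i\le N}\tilde G_i$ (disjoint union) means: $\mathcal{V}$ is the disjoint union of the $\mathcal{V}_i$; for $v\in\mathcal{V}_i$, $v'\in\mathcal{V}_{i'}$, if $i=i'$ then $vv'\in\mathcal{E}\iff vv'\in\mathcal{E}_i$, and if $i\ne i'$ then $vv'\notin\mathcal{E}$; and $P_{V\mid V\in\mathcal{V}_i}=P_{V_i}$ for all $i$. $G_1\simeq G_2$ (isomorphic probabilistic graphs) means there is a bijection $\psi:\mathcal{V}_1\to\mathcal{V}_2$ with $v v'\in\mathcal{E}_1\iff\psi(v)\psi(v')\in\mathcal{E}_2$ and $P_{V_1}(v)=P_{V_2}(\psi(v))$ for all $v$. *)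

theory Defs
  imports Complex_Main
begin

definition pgraph :: "'v set \<Rightarrow> ('v \<times> 'v) set \<Rightarrow> ('v \<Rightarrow> real) \<Rightarrow> bool" where
  "pgraph V E P \<longleftrightarrow> finite V \<and> E \<subseteq> V \<times> V \<and> sym E \<and> (\<forall>v. (v, v) \<notin> E)
     \<and> (\<forall>v\<in>V. P v \<ge> 0) \<and> sum P V = 1"

text \<open>Colorings; colors are taken in nat (every finite color set embeds into nat).\<close>
definition is_coloring :: "'v set \<Rightarrow> ('v \<times> 'v) set \<Rightarrow> ('v \<Rightarrow> nat) \<Rightarrow> bool" where
  "is_coloring V E c \<longleftrightarrow> (\<forall>u\<in>V. \<forall>v\<in>V. (u, v) \<in> E \<longrightarrow> c u \<noteq> c v)"

definition col_entropy :: "'v set \<Rightarrow> ('v \<Rightarrow> real) \<Rightarrow> ('v \<Rightarrow> nat) \<Rightarrow> real" where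
  "col_entropy V P c =
     - (\<Sum>y\<in>c ` V. (\<Sum>v\<in>{v\<in>V. c v = y}. P v) * log 2 (\<Sum>v\<in>{v\<in>V. c v = y}. P v))"

definition chromatic_entropy :: "'v set \<Rightarrow> ('v \<times> 'v) set \<Rightarrow> ('v \<Rightarrow> real) \<Rightarrow> real" where
  "chromatic_entropy V E P = Inf {col_entropy V P c | c. is_coloring V E c}"

definition pgraph_disj_union ::
  "'v set \<Rightarrow> ('v \<times> 'v) set \<Rightarrow> ('v \<Rightarrow> real) \<Rightarrow> nat \<Rightarrow>
   (nat \<Rightarrow> 'v set) \<Rightarrow> (nat \<Rightarrow> ('v \<times> 'v) set) \<Rightarrow> (nat \<Rightarrow> 'v \<Rightarrow> real) \<Rightarrow> bool" where
  "pgraph_disj_union V E P N Vs Es Ps \<longleftrightarrow>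
     V = (\<Union>i\<in>{1..N}. Vs i)
   \<and> (\<forall>i\<in>{1..N}. \<forall>j\<in>{1..N}. i \<noteq> j \<longrightarrow> Vs i \<inter> Vs j = {})
   \<and> (\<forall>i\<in>{1..N}. \<forall>v\<in>Vs i. \<forall>v'\<in>Vs i. (v, v') \<in> E \<longleftrightarrow> (v, v') \<in> Es i)
   \<and> (\<forall>i\<in>{1..N}. \<forall>j\<in>{1..N}. i \<noteq> j \<longrightarrow> (\<forall>v\<in>Vs i. \<forall>v'\<in>Vs j. (v, v') \<notin> E))
   \<and> (\<forall>i\<in>{1..N}. sum P (Vs i) > 0 \<and> (\<forall>v\<in>Vs i. P v / sum P (Vs i) = Ps i v))"

definition pgraph_iso ::
  "'v set \<Rightarrow> ('v \<times> 'v) set \<Rightarrow> ('v \<Rightarrow> real) \<Rightarrow>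
   'w set \<Rightarrow> ('w \<times> 'w) set \<Rightarrow> ('w \<Rightarrow> real) \<Rightarrow> bool" where
  "pgraph_iso V1 E1 P1 V2 E2 P2 \<longleftrightarrow>
     (\<exists>\<psi>. bij_betw \<psi> V1 V2
        \<and> (\<forall>v\<in>V1. \<forall>v'\<in>V1. (v, v') \<in> E1 \<longleftrightarrow> (\<psi> v, \<psi> v') \<in> E2)
        \<and> (\<forall>v\<in>V1. P1 v = P2 (\<psi> v)))"

end

theory Submission
  imports Defs
begin


lemma sum_filter_reindex:
  assumes "bij_betw \<phi> A B" "\<forall>v\<in>A. Q v = R (\<phi> v)" "finite A"
  shows "sum Q {v\<in>A. d (\<phi> v) = y} = sum R {w\<in>B. d w = y}"
proof -
  have fB: "finite B" using assms bij_betw_finite by blast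
  have "sum Q {v\<in>A. d (\<phi> v) = y} = (\<Sum>v\<in>A. if d (\<phi> v) = y then Q v else 0)"
    using assms(3) by (simp add: sum.inter_filter)
  also have "\<dots> = (\<Sum>v\<in>A. (\<lambda>w. if d w = y then R w else 0) (\<phi> v))"
    using assms by (intro sum.cong) auto
  also have "\<dots> = (\<Sum>w\<in>B. if d w = y then R w else 0)"
    using sum.reindex_bij_betw[OF assms(1)] by simp
  also have "\<dots> = sum R {w\<in>B. d w = y}" using fB by (simp add: sum.inter_filter)
  finally show ?thesis .
qed

lemma col_entropy_iso:
  assumes "bij_betw \<phi> A B" "\<forall>v\<in>A. Q v = R (\<phi> v)" "finite A"
  shows "col_entropy A Q (d \<circ> \<phi>) = col_entropy B R d"
proof -
  have im: "(d \<circ> \<phi>) ` A = d ` B" using assms(1) bij_betw_imp_surj_on by (metis image_comp)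
  show ?thesis unfolding col_entropy_def im
    using sum_filter_reindex[OF assms, of d] by simp
qed

lemma col_entropy_nonneg:
  assumes "pgraph V E P"
  shows "col_entropy V P c \<ge> 0"
proof -
  have fV: "finite V" and nn: "\<forall>v\<in>V. P v \<ge> 0" and s1: "sum P V = 1"
    using assms unfolding pgraph_def by auto
  have "(\<Sum>v\<in>{v\<in>V. c v = y}. P v) * log 2 (\<Sum>v\<in>{v\<in>V. c v = y}. P v) \<le> 0" for y
  proof -
    let ?s = "(\<Sum>v\<in>{v\<in>V. c v = y}. P v)"
    have "?s \<ge> 0" using nn by (intro sum_nonneg) auto
    moreover have "?s \<le> 1" using s1 sum_mono2[OF fV, of "{v\<in>V. c v = y}" P] nn by auto
    ultimately show ?thesis
    proof (cases "?s = 0")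
      case False
      with \<open>?s \<ge> 0\<close> \<open>?s \<le> 1\<close> have "log 2 ?s \<le> 0" by simp
      then show ?thesis using \<open>?s \<ge> 0\<close> by (simp add: mult_nonneg_nonpos)
    qed simp
  qed
  then show ?thesis unfolding col_entropy_def by (simp add: sum_nonpos)
qed

lemma coloring_exists:
  assumes "pgraph V E P"
  shows "\<exists>c. is_coloring V E c"
proof -
  have fV: "finite V" and irr: "\<forall>v. (v, v) \<notin> E" using assms unfolding pgraph_def by auto
  obtain f :: "_ \<Rightarrow> nat" and n where "inj_on f V" using finite_imp_inj_to_nat_seg[OF fV] by blast
  then have "is_coloring V E f" unfolding is_coloring_def using irr
    by (metis inj_on_def)
  then show ?thesis by blast
qed

lemma chrom_le:
  assumes "pgraph V E P" "is_coloring V E c"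
  shows "chromatic_entropy V E P \<le> col_entropy V P c"
  unfolding chromatic_entropy_def
  by (rule cInf_lower) (use assms col_entropy_nonneg in \<open>auto intro!: bdd_belowI[where m=0]\<close>)

lemma chrom_ge:
  assumes "pgraph V E P" "\<And>c. is_coloring V E c \<Longrightarrow> m \<le> col_entropy V P c"
  shows "m \<le> chromatic_entropy V E P"
  unfolding chromatic_entropy_def
  by (rule cInf_greatest) (use assms coloring_exists in auto)

lemma iso_refl: "pgraph_iso V E P V E P"
  unfolding pgraph_iso_def by (rule exI[of _ id]) auto

lemma iso_sym:
  assumes "pgraph_iso V1 E1 P1 V2 E2 P2"
  shows "pgraph_iso V2 E2 P2 V1 E1 P1"
proof -
  obtain \<psi> where b: "bij_betw \<psi> V1 V2" and e: "\<forall>v\<in>V1. \<forall>v'\<in>V1. (v, v') \<in> E1 \<longleftrightarrow> (\<psi> v, \<psi> v') \<in> E2"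
    and p: "\<forall>v\<in>V1. P1 v = P2 (\<psi> v)" using assms unfolding pgraph_iso_def by blast
  let ?g = "inv_into V1 \<psi>"
  have bg: "bij_betw ?g V2 V1" using b by (rule bij_betw_inv_into)
  have gin: "w \<in> V2 \<Longrightarrow> ?g w \<in> V1" for w using bg bij_betwE by blast
  have fg: "w \<in> V2 \<Longrightarrow> \<psi> (?g w) = w" for w using b by (simp add: bij_betw_inv_into_right)
  show ?thesis unfolding pgraph_iso_def
    apply (rule exI[of _ ?g])
    using bg gin fg e p by metis
qed

lemma iso_trans:
  assumes "pgraph_iso V1 E1 P1 V2 E2 P2" "pgraph_iso V2 E2 P2 V3 E3 P3"
  shows "pgraph_iso V1 E1 P1 V3 E3 P3"
proof -
  obtain \<psi> where b: "bij_betw \<psi> V1 V2" and e: "\<forall>v\<in>V1. \<forall>v'\<in>V1. (v, v') \<in> E1 \<longleftrightarrow> (\<psi> v, \<psi> v') \<in> E2"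
    and p: "\<forall>v\<in>V1. P1 v = P2 (\<psi> v)" using assms(1) unfolding pgraph_iso_def by blast
  obtain \<chi> where b2: "bij_betw \<chi> V2 V3" and e2: "\<forall>v\<in>V2. \<forall>v'\<in>V2. (v, v') \<in> E2 \<longleftrightarrow> (\<chi> v, \<chi> v') \<in> E3"
    and p2: "\<forall>v\<in>V2. P2 v = P3 (\<chi> v)" using assms(2) unfolding pgraph_iso_def by blast
  have inn: "v \<in> V1 \<Longrightarrow> \<psi> v \<in> V2" for v using b bij_betwE by blast
  show ?thesis unfolding pgraph_iso_def
    apply (rule exI[of _ "\<chi> \<circ> \<psi>"])
    using bij_betw_trans[OF b b2] e e2 p p2 inn by auto
qed

lemma gibbs_pt:
  fixes a b :: real
  assumes "a \<ge> 0" "b > 0"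
  shows "a - b \<le> a * ln a - a * ln b"
proof (cases "a = 0")
  case False
  then have a: "a > 0" using assms by simp
  have "ln (b / a) \<le> b / a - 1" using a assms by (intro ln_le_minus_one) simp
  then have "ln b - ln a \<le> b / a - 1" using a assms by (simp add: ln_div)
  then have "a * (ln b - ln a) \<le> a * (b / a - 1)" using a by (intro mult_left_mono) auto
  then show ?thesis using a by (simp add: algebra_simps)
qed (use assms in simp)

lemma jensen_xlogx:
  fixes p x :: "nat \<Rightarrow> real"
  assumes "finite I" "\<forall>i\<in>I. p i > 0" "sum p I = 1" "\<forall>i\<in>I. x i \<ge> 0"
  shows "(\<Sum>i\<in>I. p i * x i) * log 2 (\<Sum>i\<in>I. p i * x i) \<le> (\<Sum>i\<in>I. p i * (x i * log 2 (x i)))"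
proof -
  let ?s = "\<Sum>i\<in>I. p i * x i"
  have s0: "?s \<ge> 0" using assms by (intro sum_nonneg) (simp add: less_imp_le)
  show ?thesis
  proof (cases "?s = 0")
    case True
    then have "\<forall>i\<in>I. p i * x i = 0" using sum_nonneg_eq_0_iff[OF assms(1), of "\<lambda>i. p i * x i"] assms
      by (simp add: less_imp_le)
    then have "\<forall>i\<in>I. x i = 0" using assms(2) by (metis less_irrefl mult_eq_0_iff)
    then show ?thesis using True by simp
  next
    case False
    then have sp: "?s > 0" using s0 by simp
    have "(\<Sum>i\<in>I. p i * (x i - ?s)) \<le> (\<Sum>i\<in>I. p i * (x i * ln (x i) - x i * ln ?s))"
      using assms gibbs_pt[OF _ sp] by (intro sum_mono mult_left_mono) (auto simp: less_imp_le)
    moreover have "(\<Sum>i\<in>I. p i * (x i - ?s)) = 0"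
      using assms(3) by (simp add: right_diff_distrib sum_subtractf sum_distrib_right[symmetric])
    moreover have "(\<Sum>i\<in>I. p i * (x i * ln (x i) - x i * ln ?s)) =
        (\<Sum>i\<in>I. p i * (x i * ln (x i))) - ?s * ln ?s"
      by (simp add: right_diff_distrib sum_subtractf sum_distrib_right mult.assoc)
    ultimately have "?s * ln ?s \<le> (\<Sum>i\<in>I. p i * (x i * ln (x i)))" by simp
    then have "?s * ln ?s / ln 2 \<le> (\<Sum>i\<in>I. p i * (x i * ln (x i))) / ln 2"
      by (intro divide_right_mono) auto
    then show ?thesis by (simp add: log_def sum_divide_distrib)
  qed
qed



theorem lemma2:
  fixes V :: "'v set" and E :: "('v \<times> 'v) set" and P :: "'v \<Rightarrow> real"
    and N :: nat and Vs :: "nat \<Rightarrow> 'v set" and Es :: "nat \<Rightarrow> ('v \<times> 'v) set"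
    and Ps :: "nat \<Rightarrow> 'v \<Rightarrow> real"
  assumes "N \<ge> 1"
    and "pgraph V E P"
    and "\<forall>i\<in>{1..N}. pgraph (Vs i) (Es i) (Ps i)"
    and "pgraph_disj_union V E P N Vs Es Ps"
    and "\<forall>i\<in>{1..<N}. pgraph_iso (Vs i) (Es i) (Ps i) (Vs (i+1)) (Es (i+1)) (Ps (i+1))"
  shows "chromatic_entropy V E P = chromatic_entropy (Vs 1) (Es 1) (Ps 1)"
proof -
  define I where "I = {1..N}"
  define p where "p i = sum P (Vs i)" for i
  have fI: "finite I" and I1: "1 \<in> I" using assms(1) unfolding I_def by auto
  have VU: "V = (\<Union>i\<in>I. Vs i)"
    and disj: "\<forall>i\<in>I. \<forall>j\<in>I. i \<noteq> j \<longrightarrow> Vs i \<inter> Vs j = {}"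
    and Ein: "\<forall>i\<in>I. \<forall>v\<in>Vs i. \<forall>v'\<in>Vs i. (v, v') \<in> E \<longleftrightarrow> (v, v') \<in> Es i"
    and Ecross: "\<forall>i\<in>I. \<forall>j\<in>I. i \<noteq> j \<longrightarrow> (\<forall>v\<in>Vs i. \<forall>v'\<in>Vs j. (v, v') \<notin> E)"
    and pP: "\<forall>i\<in>I. p i > 0 \<and> (\<forall>v\<in>Vs i. P v / p i = Ps i v)"
    using assms(4) unfolding pgraph_disj_union_def I_def p_def by auto
  have fV: "finite V" using assms(2) unfolding pgraph_def by auto
  have fVs: "i \<in> I \<Longrightarrow> finite (Vs i)" for i using VU fV by (meson UN_I finite_subset subsetI)
  have pg: "i \<in> I \<Longrightarrow> pgraph (Vs i) (Es i) (Ps i)" for i using assms(3) I_def by auto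
  have Pv: "i \<in> I \<Longrightarrow> v \<in> Vs i \<Longrightarrow> P v = p i * Ps i v" for i v
    using pP by (metis less_irrefl nonzero_mult_div_cancel_left times_divide_eq_right)
  have decomp: "sum P {v\<in>V. c v = y} = (\<Sum>i\<in>I. p i * sum (Ps i) {v\<in>Vs i. c v = y})"
    for c :: "'v \<Rightarrow> nat" and y
  proof -
    have "{v\<in>V. c v = y} = (\<Union>i\<in>I. {v\<in>Vs i. c v = y})" using VU by auto
    then have "sum P {v\<in>V. c v = y} = sum P (\<Union>i\<in>I. {v\<in>Vs i. c v = y})" by simp
    also have "\<dots> = (\<Sum>i\<in>I. sum P {v\<in>Vs i. c v = y})"
      using fI fVs disj by (intro sum.UNION_disjoint) auto
    also have "\<dots> = (\<Sum>i\<in>I. p i * sum (Ps i) {v\<in>Vs i. c v = y})"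
      using Pv by (intro sum.cong refl) (simp add: sum_distrib_left)
    finally show ?thesis .
  qed
  have sp: "sum p I = 1"
  proof -
    have "sum P V = (\<Sum>i\<in>I. p i * sum (Ps i) (Vs i))" using decomp[of "\<lambda>_. 0" 0] by simp
    also have "\<dots> = sum p I" using pg unfolding pgraph_def by simp
    finally show ?thesis using assms(2) unfolding pgraph_def by simp
  qed
  have chain: "i \<in> {1..N} \<longrightarrow> pgraph_iso (Vs 1) (Es 1) (Ps 1) (Vs i) (Es i) (Ps i)" for i
  proof (induction i)
    case (Suc k)
    show ?case
    proof (cases "k = 0")
      case True then show ?thesis by (simp add: iso_refl)
    next
      case False
      then show ?thesis using Suc assms(5) iso_trans by fastforce
    qed
  qed simp
  have chain1: "i \<in> I \<Longrightarrow> pgraph_iso (Vs 1) (Es 1) (Ps 1) (Vs i) (Es i) (Ps i)" for i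
    using chain I_def by auto
  let ?m = "chromatic_entropy (Vs 1) (Es 1) (Ps 1)"
  let ?M = "chromatic_entropy V E P"
  have "?m \<le> ?M"
  proof (rule chrom_ge[OF assms(2)])
    fix c assume col: "is_coloring V E c"
    define f :: "real \<Rightarrow> real" where "f x = x * log 2 x" for x
    define Q where "Q i y = sum (Ps i) {v\<in>Vs i. c v = y}" for i y
    define C where "C = c ` V"
    have fC: "finite C" using fV C_def by simp
    have Hi: "?m \<le> - (\<Sum>y\<in>C. f (Q i y))" if iI: "i \<in> I" for i
    proof -
      obtain \<psi> where b: "bij_betw \<psi> (Vs 1) (Vs i)"
        and e: "\<forall>v\<in>Vs 1. \<forall>v'\<in>Vs 1. (v, v') \<in> Es 1 \<longleftrightarrow> (\<psi> v, \<psi> v') \<in> Es i"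
        and pp: "\<forall>v\<in>Vs 1. Ps 1 v = Ps i (\<psi> v)"
        using chain1[OF iI] unfolding pgraph_iso_def by blast
      have inn: "v \<in> Vs 1 \<Longrightarrow> \<psi> v \<in> Vs i" for v using b bij_betwE by blast
      have sub: "Vs i \<subseteq> V" using VU iI by auto
      have "is_coloring (Vs 1) (Es 1) (c \<circ> \<psi>)"
        unfolding is_coloring_def
      proof (intro ballI impI)
        fix u v assume u: "u \<in> Vs 1" and v: "v \<in> Vs 1" and uv: "(u, v) \<in> Es 1"
        then have "(\<psi> u, \<psi> v) \<in> E" using e Ein iI inn by blast
        then show "(c \<circ> \<psi>) u \<noteq> (c \<circ> \<psi>) v" using col sub inn u v unfolding is_coloring_def by auto
      qed
      then have "?m \<le> col_entropy (Vs 1) (Ps 1) (c \<circ> \<psi>)" using chrom_le pg I1 by blast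
      also have "\<dots> = col_entropy (Vs i) (Ps i) c"
        using col_entropy_iso[OF b pp fVs[OF I1]] by simp
      also have "\<dots> = - (\<Sum>y\<in>c ` Vs i. f (Q i y))" unfolding col_entropy_def f_def Q_def by simp
      also have "\<dots> = - (\<Sum>y\<in>C. f (Q i y))"
      proof -
        have "(\<Sum>y\<in>c ` Vs i. f (Q i y)) = (\<Sum>y\<in>C. f (Q i y))"
        proof (rule sum.mono_neutral_left[OF fC])
          show "c ` Vs i \<subseteq> C" using sub C_def by auto
          show "\<forall>y\<in>C - c ` Vs i. f (Q i y) = 0"
          proof
            fix y assume "y \<in> C - c ` Vs i"
            then have "{v\<in>Vs i. c v = y} = {}" by auto
            then have "Q i y = 0" unfolding Q_def by (metis sum.empty)
            then show "f (Q i y) = 0" unfolding f_def by simp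
          qed
        qed
        then show ?thesis by simp
      qed
      finally show ?thesis .
    qed
    have Qnn: "i \<in> I \<Longrightarrow> Q i y \<ge> 0" for i y
      using pg unfolding Q_def pgraph_def by (intro sum_nonneg) auto
    have "col_entropy V P c = - (\<Sum>y\<in>C. f (\<Sum>i\<in>I. p i * Q i y))"
      unfolding col_entropy_def C_def f_def Q_def using decomp by simp
    also have "\<dots> \<ge> - (\<Sum>y\<in>C. \<Sum>i\<in>I. p i * f (Q i y))"
    proof -
      have "f (\<Sum>i\<in>I. p i * Q i y) \<le> (\<Sum>i\<in>I. p i * f (Q i y))" for y
        unfolding f_def by (rule jensen_xlogx[OF fI _ sp]) (use pP Qnn in auto)
      then show ?thesis by (intro le_imp_neg_le sum_mono)
    qed
    also have "(\<Sum>y\<in>C. \<Sum>i\<in>I. p i * f (Q i y)) = (\<Sum>i\<in>I. p i * (\<Sum>y\<in>C. f (Q i y)))"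
      by (subst sum.swap) (simp add: sum_distrib_left)
    finally have "col_entropy V P c \<ge> (\<Sum>i\<in>I. p i * (- (\<Sum>y\<in>C. f (Q i y))))"
      by (simp add: sum_negf)
    moreover have "(\<Sum>i\<in>I. p i * (- (\<Sum>y\<in>C. f (Q i y)))) \<ge> (\<Sum>i\<in>I. p i * ?m)"
      using Hi pP by (intro sum_mono mult_left_mono) (auto simp: less_imp_le)
    moreover have "(\<Sum>i\<in>I. p i * ?m) = ?m" using sp by (simp add: sum_distrib_right[symmetric])
    ultimately show "?m \<le> col_entropy V P c" by linarith
  qed
  moreover have "?M \<le> ?m"
  proof (rule chrom_ge[OF pg[OF I1]])
    fix c1 assume col1: "is_coloring (Vs 1) (Es 1) c1"
    have isos: "\<forall>i\<in>I. pgraph_iso (Vs i) (Es i) (Ps i) (Vs 1) (Es 1) (Ps 1)"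
      using chain1 iso_sym by blast
    have ex: "\<forall>i\<in>I. \<exists>\<phi>. bij_betw \<phi> (Vs i) (Vs 1)
        \<and> (\<forall>v\<in>Vs i. \<forall>v'\<in>Vs i. (v, v') \<in> Es i \<longleftrightarrow> (\<phi> v, \<phi> v') \<in> Es 1)
        \<and> (\<forall>v\<in>Vs i. Ps i v = Ps 1 (\<phi> v))"
      using isos unfolding pgraph_iso_def by simp
    obtain \<phi> where phi: "\<forall>i\<in>I. bij_betw (\<phi> i) (Vs i) (Vs 1)
        \<and> (\<forall>v\<in>Vs i. \<forall>v'\<in>Vs i. (v, v') \<in> Es i \<longleftrightarrow> (\<phi> i v, \<phi> i v') \<in> Es 1)
        \<and> (\<forall>v\<in>Vs i. Ps i v = Ps 1 (\<phi> i v))"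
      using bchoice[OF ex] by blast
    have b: "\<And>i. i \<in> I \<Longrightarrow> bij_betw (\<phi> i) (Vs i) (Vs 1)"
      and e: "\<And>i. i \<in> I \<Longrightarrow> \<forall>v\<in>Vs i. \<forall>v'\<in>Vs i. (v, v') \<in> Es i \<longleftrightarrow> (\<phi> i v, \<phi> i v') \<in> Es 1"
      and pp: "\<And>i. i \<in> I \<Longrightarrow> \<forall>v\<in>Vs i. Ps i v = Ps 1 (\<phi> i v)"
      using phi by auto
    have inn: "i \<in> I \<Longrightarrow> v \<in> Vs i \<Longrightarrow> \<phi> i v \<in> Vs 1" for i v using b bij_betwE by blast
    define idx where "idx v = (THE i. i \<in> I \<and> v \<in> Vs i)" for v
    have idx: "i \<in> I \<Longrightarrow> v \<in> Vs i \<Longrightarrow> idx v = i" for i v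
      unfolding idx_def by (rule the_equality) (use disj in blast)+
    define c where "c v = c1 (\<phi> (idx v) v)" for v
    have cVs: "i \<in> I \<Longrightarrow> v \<in> Vs i \<Longrightarrow> c v = c1 (\<phi> i v)" for i v using idx c_def by simp
    have col: "is_coloring V E c" unfolding is_coloring_def
    proof (intro ballI impI)
      fix u v assume u: "u \<in> V" and v: "v \<in> V" and uv: "(u, v) \<in> E"
      obtain i where i: "i \<in> I" "u \<in> Vs i" using u VU by auto
      obtain j where j: "j \<in> I" "v \<in> Vs j" using v VU by auto
      have "i = j" using Ecross i j uv by blast
      then have "(u, v) \<in> Es i" using Ein i j uv by blast
      then have "(\<phi> i u, \<phi> i v) \<in> Es 1" using e i j \<open>i = j\<close> by blast
      then have "c1 (\<phi> i u) \<noteq> c1 (\<phi> i v)" using col1 inn i j \<open>i = j\<close> unfolding is_coloring_def by blast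
      then show "c u \<noteq> c v" using cVs i j \<open>i = j\<close> by simp
    qed
    have im: "c ` V = c1 ` Vs 1"
    proof -
      have "c ` Vs i = c1 ` Vs 1" if "i \<in> I" for i
      proof -
        have "c ` Vs i = c1 ` (\<phi> i ` Vs i)" using cVs[OF that] by (auto simp: image_iff)
        also have "\<phi> i ` Vs i = Vs 1" using b[OF that] bij_betw_imp_surj_on by blast
        finally show ?thesis .
      qed
      then show ?thesis using VU I1 by (auto simp: image_UN)
    qed
    have mass: "sum P {v\<in>V. c v = y} = sum (Ps 1) {w\<in>Vs 1. c1 w = y}" for y
    proof -
      have "sum (Ps i) {v\<in>Vs i. c v = y} = sum (Ps 1) {w\<in>Vs 1. c1 w = y}" if iI: "i \<in> I" for i
      proof -
        have "{v\<in>Vs i. c v = y} = {v\<in>Vs i. c1 (\<phi> i v) = y}" using cVs[OF iI] by auto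
        then show ?thesis using sum_filter_reindex[OF b[OF iI] pp[OF iI] fVs[OF iI], of c1 y] by simp
      qed
      then have "sum P {v\<in>V. c v = y} = (\<Sum>i\<in>I. p i * sum (Ps 1) {w\<in>Vs 1. c1 w = y})"
        using decomp[of c y] by simp
      also have "\<dots> = sum (Ps 1) {w\<in>Vs 1. c1 w = y}" using sp by (simp add: sum_distrib_right[symmetric])
      finally show ?thesis .
    qed
    have "?M \<le> col_entropy V P c" using chrom_le[OF assms(2) col] .
    also have "col_entropy V P c = col_entropy (Vs 1) (Ps 1) c1"
      unfolding col_entropy_def im using mass by simp
    finally show "?M \<le> col_entropy (Vs 1) (Ps 1) c1" .
  qed
  ultimately show ?thesis by simp
qed

end
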